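(* Let $\Gamma\le\mathrm{Iso}(\mathbb{R}^{r,s})$ be a subgroup whose centralizer in $\mathrm{Iso}(\mathbb{R}^{r,s})$ has an open orbit in $\mathbb{R}^{r,s}$, let $\Delta$ be the center of $\Gamma$ and $U_0=U_\Gamma\cap U_\Gamma^\perp$. Then $\mathbb{R}^{r,s}\supseteq U_\Delta^\perp\supseteq U_0\supseteq\{0\}$, and for every $(I+A,v)\in\Gamma$: $A(\mathbb{R}^{r,s})\subseteq U_\Delta^\perp$, $A(U_\Delta^\perp)\subseteq U_0$, and $A(U_0)=\{0\}$.
   Context: $\mathbb{R}^{r,s}$ denotes $\mathbb{R}^{n}$, $n=r+s$, with a nondegenerate symmetric bilinear form $\langle\cdot,\cdot\rangle$ of signature $(r,s)$; $\mathrm{Iso}(\mathbb{R}^{r,s})$ is its group of affine isometries, whose elements are written $\gamma=(I+A,v)\colon x\mapsto(I+A)x+v$. For a subset $\Lambda$ of $\Gamma$, $U_\Lambda=\sum_{(I+A,v)\in\Lambda}\operatorname{im}A$; $\perp$ denotes orthogonal complement with respect to $\langle\cdot,\cdot\rangle$. Known facts (Wolf) for such $\Gamma$: every $(I+A,v)\in\Gamma$ satisfies $A^2=0$, $Av=0$, $\langle Ax,y\rangle=-\langle x,Ay\rangle$, $\ker A=(\operatorname{im}A)^\perp$, $\operatorname{im}A$ totally isotropic; for $\gamma_i=(I+A_i,v_i)\in\Gamma$ one has $A_1A_2A_3=0$ and $[\gamma_1,\gamma_2]=(I+2A_1A_2,2A_1v_2)$. *)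

theory Defs
  imports "HOL-Analysis.Analysis"
begin

text \<open>The pseudo-Euclidean space R^{r,s} is modelled as real^'n with the form
  <x,y> = sum_i eps i * x_i * y_i, where eps i \<in> {1,-1} (r of them equal -1 or 1
  according to the signature; every signature arises this way).\<close>

definition pform :: "('n::finite \<Rightarrow> real) \<Rightarrow> real^'n \<Rightarrow> real^'n \<Rightarrow> real" where
  "pform eps x y = (\<Sum>i\<in>UNIV. eps i * x$i * y$i)"

definition signature_ok :: "('n::finite \<Rightarrow> real) \<Rightarrow> bool" where
  "signature_ok eps \<longleftrightarrow> (\<forall>i. eps i = 1 \<or> eps i = -1)"

text \<open>Affine maps x \<mapsto> M x + v, represented as pairs (M, v); M = I + A.\<close>

type_synonym 'n aff = "(real^'n^'n) \<times> (real^'n)"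

definition aff_apply :: "'n::finite aff \<Rightarrow> real^'n \<Rightarrow> real^'n" where
  "aff_apply g x = fst g *v x + snd g"

definition aff_comp :: "'n::finite aff \<Rightarrow> 'n aff \<Rightarrow> 'n aff" where
  "aff_comp g h = (fst g ** fst h, fst g *v snd h + snd g)"

definition aff_id :: "'n::finite aff" where
  "aff_id = (mat 1, 0)"

definition lin_part :: "'n::finite aff \<Rightarrow> real^'n^'n" where
  "lin_part g = fst g - mat 1"

text \<open>The isometry group Iso(R^{r,s}): affine maps whose linear part preserves the form
  (such a linear part is automatically invertible since the form is nondegenerate).\<close>

definition Iso :: "('n::finite \<Rightarrow> real) \<Rightarrow> 'n aff set" where
  "Iso eps = {g. \<forall>x y. pform eps (fst g *v x) (fst g *v y) = pform eps x y}"

definition is_subgroup :: "('n::finite \<Rightarrow> real) \<Rightarrow> 'n aff set \<Rightarrow> bool" where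
  "is_subgroup eps G \<longleftrightarrow> G \<subseteq> Iso eps \<and> aff_id \<in> G \<and>
     (\<forall>g\<in>G. \<forall>h\<in>G. aff_comp g h \<in> G) \<and>
     (\<forall>g\<in>G. \<exists>h\<in>G. aff_comp g h = aff_id \<and> aff_comp h g = aff_id)"

definition centralizer :: "('n::finite \<Rightarrow> real) \<Rightarrow> 'n aff set \<Rightarrow> 'n aff set" where
  "centralizer eps G = {c \<in> Iso eps. \<forall>g\<in>G. aff_comp c g = aff_comp g c}"

definition center :: "'n::finite aff set \<Rightarrow> 'n aff set" where
  "center G = {c \<in> G. \<forall>g\<in>G. aff_comp c g = aff_comp g c}"

definition orbit :: "'n::finite aff set \<Rightarrow> real^'n \<Rightarrow> (real^'n) set" where
  "orbit H x = (\<lambda>g. aff_apply g x) ` H"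

definition has_open_orbit :: "'n::finite aff set \<Rightarrow> bool" where
  "has_open_orbit H \<longleftrightarrow> (\<exists>x. open (orbit H x))"

definition U_of :: "'n::finite aff set \<Rightarrow> (real^'n) set" where
  "U_of L = span (\<Union>g\<in>L. range (\<lambda>x. lin_part g *v x))"

definition orth :: "('n::finite \<Rightarrow> real) \<Rightarrow> (real^'n) set \<Rightarrow> (real^'n) set" where
  "orth eps S = {x. \<forall>y\<in>S. pform eps x y = 0}"

end

theory Submission
  imports Defs
begin


lemma pform_add_left[simp]: "pform e (x + y) z = pform e x z + pform e y z"
  by (simp add: pform_def sum.distrib algebra_simps)
lemma pform_add_right[simp]: "pform e z (x + y) = pform e z x + pform e z y"
  by (simp add: pform_def sum.distrib algebra_simps)
lemma pform_diff_left[simp]: "pform e (x - y) z = pform e x z - pform e y z"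
  by (simp add: pform_def sum_subtractf algebra_simps)
lemma pform_diff_right[simp]: "pform e z (x - y) = pform e z x - pform e z y"
  by (simp add: pform_def sum_subtractf algebra_simps)
lemma pform_scale_left[simp]: "pform e (c *\<^sub>R x) z = c * pform e x z"
  by (simp add: pform_def sum_distrib_left algebra_simps)
lemma pform_scale_right[simp]: "pform e z (c *\<^sub>R x) = c * pform e z x"
  by (simp add: pform_def sum_distrib_left algebra_simps)
lemma pform_neg_left[simp]: "pform e (- x) z = - pform e x z"
  by (simp add: pform_def sum_negf algebra_simps)
lemma pform_neg_right[simp]: "pform e z (- x) = - pform e z x"
  by (simp add: pform_def sum_negf algebra_simps)
lemma pform_zero[simp]: "pform e 0 z = 0" "pform e z 0 = 0"
  by (simp_all add: pform_def)
lemma pform_sym: "pform e x y = pform e y x"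
  by (simp add: pform_def algebra_simps)

lemma pform_nondeg:
  assumes "signature_ok e" "\<And>y. pform e x y = 0" shows "x = 0"
proof -
  have "x $ i = 0" for i
  proof -
    have "pform e x (axis i 1) = e i * x $ i"
      by (simp add: pform_def axis_def if_distrib sum.delta cong: if_cong)
    moreover have "e i \<noteq> 0" using assms(1) unfolding signature_ok_def by (metis zero_neq_one zero_neq_neg_one)
    ultimately show ?thesis using assms(2)[of "axis i 1"] by simp
  qed
  then show ?thesis by (simp add: vec_eq_iff)
qed

lemma orth_span: "orth e (span S) = orth e S"
proof
  show "orth e (span S) \<subseteq> orth e S" unfolding orth_def using span_base by blast
  show "orth e S \<subseteq> orth e (span S)"
  proof
    fix x assume x: "x \<in> orth e S"
    have "\<forall>y\<in>span S. pform e x y = 0"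
    proof
      fix y assume "y \<in> span S"
      then show "pform e x y = 0"
        by (induction rule: span_induct_alt) (use x in \<open>auto simp: orth_def\<close>)
    qed
    then show "x \<in> orth e (span S)" by (simp add: orth_def)
  qed
qed

definition Lf :: "'n::finite aff \<Rightarrow> real^'n \<Rightarrow> real^'n" where
  "Lf g x = lin_part g *v x"

lemma Lf_add[simp]: "Lf g (x + y) = Lf g x + Lf g y"
  by (simp add: Lf_def algebra_simps)
lemma Lf_diff[simp]: "Lf g (x - y) = Lf g x - Lf g y"
  by (simp add: Lf_def algebra_simps)
lemma Lf_scale[simp]: "Lf g (c *\<^sub>R x) = c *\<^sub>R Lf g x"
  by (simp add: Lf_def algebra_simps)
lemma Lf_neg[simp]: "Lf g (- x) = - Lf g x"
  by (metis Lf_diff diff_0 Lf_def matrix_vector_mult_0_right)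
lemma Lf_zero[simp]: "Lf g 0 = 0"
  by (simp add: Lf_def)

lemma aff_apply_Lf: "aff_apply g y = y + Lf g y + snd g"
  by (simp add: aff_apply_def Lf_def lin_part_def algebra_simps)

lemma aff_apply_comp: "aff_apply (aff_comp a b) x = aff_apply a (aff_apply b x)"
  by (simp add: aff_apply_def aff_comp_def matrix_vector_mul_assoc algebra_simps)

lemma aff_ext: assumes "\<And>x. aff_apply a x = aff_apply b x" shows "a = b"
proof -
  have s: "snd a = snd b" using assms[of 0] by (simp add: aff_apply_def)
  have "fst a = fst b" unfolding matrix_eq using assms s by (simp add: aff_apply_def)
  then show ?thesis using s by (simp add: prod_eq_iff)
qed

lemma Lf_via_apply: "Lf g y = aff_apply g y - y - aff_apply g 0"
  unfolding aff_apply_Lf by (simp add: algebra_simps)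
lemma snd_via_apply: "snd g = aff_apply g 0"
  by (simp add: aff_apply_def)

lemma aff_id_apply[simp]: "aff_apply aff_id x = x"
  by (simp add: aff_apply_def aff_id_def)




lemma fst_apply: "fst g *v x = x + Lf g x"
  by (simp add: Lf_def lin_part_def algebra_simps)

lemma iso_expand:
  assumes "g \<in> Iso e"
  shows "pform e (Lf g x) y + pform e x (Lf g y) + pform e (Lf g x) (Lf g y) = 0"
proof -
  have "pform e (fst g *v x) (fst g *v y) = pform e x y" using assms by (simp add: Iso_def)
  then show ?thesis unfolding fst_apply by (simp add: algebra_simps)
qed

lemma aff_id_centralizer: "aff_id \<in> centralizer e G"
proof -
  have "aff_id \<in> Iso e" by (simp add: Iso_def aff_id_def)
  moreover have "aff_comp aff_id g = aff_comp g aff_id" for g :: "'n::finite aff"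
    by (rule aff_ext) (simp add: aff_apply_comp)
  ultimately show ?thesis unfolding centralizer_def by blast
qed

lemma elem_facts:
  fixes e :: "'n::finite \<Rightarrow> real"
  assumes "is_subgroup e \<Gamma>" "has_open_orbit (centralizer e \<Gamma>)" "g \<in> \<Gamma>"
  shows "pform e (Lf g x) (Lf g y) = 0" "pform e (Lf g z) (snd g) = 0"
proof -
  obtain x0 where op: "open (orbit (centralizer e \<Gamma>) x0)"
    using assms(2) by (auto simp: has_open_orbit_def)
  define Orb where "Orb = orbit (centralizer e \<Gamma>) x0"
  have x0Orb: "x0 \<in> Orb" unfolding Orb_def orbit_def using aff_id_centralizer
    by (metis aff_id_apply image_eqI)
  define q where "q y = pform e (aff_apply g y - y) (aff_apply g y - y)" for y
  have qconst: "q y = q x0" if yO: "y \<in> Orb" for y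
  proof -
    obtain c where c: "c \<in> centralizer e \<Gamma>" "y = aff_apply c x0"
      using yO unfolding Orb_def orbit_def by blast
    have comm: "aff_apply g (aff_apply c u) = aff_apply c (aff_apply g u)" for u
    proof -
      have "aff_comp c g = aff_comp g c" using c(1) assms(3) by (simp add: centralizer_def)
      then show ?thesis using aff_apply_comp[of c g u] aff_apply_comp[of g c u] by simp
    qed
    have "aff_apply g y - y = fst c *v (aff_apply g x0 - x0)"
      using c(2) comm[of x0] by (simp add: aff_apply_def algebra_simps)
    moreover have "c \<in> Iso e" using c(1) by (simp add: centralizer_def)
    ultimately show ?thesis unfolding q_def Iso_def by simp
  qed
  obtain r where r: "r > 0" "ball x0 r \<subseteq> Orb" using op x0Orb Orb_def
    by (meson open_contains_ball)
  define d where "d = Lf g x0 + snd g"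
  have key: "pform e (Lf g w) (Lf g w) = 0 \<and> pform e (Lf g w) d = 0" for w
  proof -
    define s where "s = r / (2 * (norm w + 1))"
    have dp: "2 * (norm w + 1) > (0::real)" by (smt (verit) norm_ge_zero)
    have s0: "s > 0" unfolding s_def using r dp by simp
    have "norm (s *\<^sub>R w) < r"
    proof -
      have "norm (s *\<^sub>R w) = s * norm w" using s0 by simp
      also have "\<dots> < s * (2 * (norm w + 1))"
        using s0 mult_strict_left_mono[of "norm w" "2*(norm w+1)" s] by (smt (verit) norm_ge_zero)
      also have "\<dots> = r" using dp by (simp add: s_def)
      finally show ?thesis .
    qed
    then have in1: "x0 + s *\<^sub>R w \<in> Orb" and in2: "x0 - s *\<^sub>R w \<in> Orb"
      using r(2) by (auto simp: dist_norm)
    have qexp: "q (x0 + t *\<^sub>R w) = q x0 + 2 * t * pform e (Lf g w) d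
        + t * t * pform e (Lf g w) (Lf g w)" for t
    proof -
      have "aff_apply g (x0 + t *\<^sub>R w) - (x0 + t *\<^sub>R w) = d + t *\<^sub>R Lf g w"
        unfolding aff_apply_Lf d_def by (simp add: algebra_simps)
      moreover have "aff_apply g x0 - x0 = d" unfolding aff_apply_Lf d_def by simp
      moreover have "pform e (d + t *\<^sub>R Lf g w) (d + t *\<^sub>R Lf g w) = pform e d d
          + t * pform e d (Lf g w) + t * pform e (Lf g w) d + t * t * pform e (Lf g w) (Lf g w)"
        by (simp add: algebra_simps)
      moreover have "pform e d (Lf g w) = pform e (Lf g w) d" by (rule pform_sym)
      ultimately show ?thesis unfolding q_def by simp
    qed
    have e1: "2 * s * pform e (Lf g w) d + s * s * pform e (Lf g w) (Lf g w) = 0"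
      using qexp[of s] qconst[OF in1] by simp
    have e2: "- 2 * s * pform e (Lf g w) d + s * s * pform e (Lf g w) (Lf g w) = 0"
    proof -
      have "x0 + (-s) *\<^sub>R w = x0 - s *\<^sub>R w" by simp
      then have "q (x0 + (-s) *\<^sub>R w) = q x0" using qconst[OF in2] by simp
      then show ?thesis using qexp[of "-s"] by simp
    qed
    have "s * s * pform e (Lf g w) (Lf g w) = 0" using e1 e2 by linarith
    then have a: "pform e (Lf g w) (Lf g w) = 0" using s0 by simp
    then have "s * pform e (Lf g w) d = 0" using e1 by simp
    then show ?thesis using a s0 by simp
  qed
  have F2: "pform e (Lf g a) (Lf g b) = 0" for a b
  proof -
    have "pform e (Lf g (a + b)) (Lf g (a + b)) = 0" using key by blast
    moreover have "pform e (Lf g (a + b)) (Lf g (a + b)) = pform e (Lf g a) (Lf g a)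
      + pform e (Lf g a) (Lf g b) + (pform e (Lf g b) (Lf g a) + pform e (Lf g b) (Lf g b))"
      by simp
    moreover have "pform e (Lf g b) (Lf g a) = pform e (Lf g a) (Lf g b)" by (rule pform_sym)
    ultimately have "2 * pform e (Lf g a) (Lf g b) = 0"
      using key[of a] key[of b] by simp
    then show ?thesis by simp
  qed
  then show "pform e (Lf g x) (Lf g y) = 0" .
  show "pform e (Lf g z) (snd g) = 0"
    using key[of z] F2[of z x0] by (simp add: d_def)
qed




locale wolf =
  fixes e :: "'n::finite \<Rightarrow> real" and G :: "'n aff set"
  assumes sig: "signature_ok e" and sg: "is_subgroup e G"
    and oo: "has_open_orbit (centralizer e G)"
begin

lemma memIso: "g \<in> G \<Longrightarrow> g \<in> Iso e" using sg by (auto simp: is_subgroup_def)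
lemma comp_mem: "g \<in> G \<Longrightarrow> h \<in> G \<Longrightarrow> aff_comp g h \<in> G" using sg by (auto simp: is_subgroup_def)

lemma F2[simp]: "g \<in> G \<Longrightarrow> pform e (Lf g x) (Lf g y) = 0"
  using elem_facts(1)[OF sg oo] by blast
lemma F5: "g \<in> G \<Longrightarrow> pform e (Lf g z) (snd g) = 0"
  using elem_facts(2)[OF sg oo] by blast

lemma F1: "g \<in> G \<Longrightarrow> pform e (Lf g x) y = - pform e x (Lf g y)"
  using iso_expand[OF memIso, of g x y] by simp

lemma nondeg: "(\<And>y. pform e x y = 0) \<Longrightarrow> x = 0"
  using pform_nondeg[OF sig] by blast

lemma F3[simp]: "g \<in> G \<Longrightarrow> Lf g (Lf g x) = 0"
proof (rule nondeg)
  fix y assume "g \<in> G"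
  then show "pform e (Lf g (Lf g x)) y = 0" using F1[of g "Lf g x" y] by simp
qed

lemma F4[simp]: "g \<in> G \<Longrightarrow> Lf g (snd g) = 0"
proof (rule nondeg)
  fix y assume "g \<in> G"
  then show "pform e (Lf g (snd g)) y = 0"
    using F1[of g "snd g" y] F5[of g y] pform_sym[of e "snd g" "Lf g y"] by simp
qed

lemma comp_L: "Lf (aff_comp g h) x = Lf g x + Lf h x + Lf g (Lf h x)"
  unfolding Lf_via_apply[of "aff_comp g h"] aff_apply_comp
  by (simp add: aff_apply_Lf algebra_simps)

lemma comp_T: "snd (aff_comp g h) = snd h + Lf g (snd h) + snd g"
  by (simp add: aff_comp_def fst_apply)

lemma inverse:
  assumes "g \<in> G"
  obtains g' where "g' \<in> G" "\<And>x. Lf g' x = - Lf g x" "snd g' = - snd g"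
proof -
  obtain h where h: "h \<in> G" "aff_comp g h = aff_id"
    using sg assms unfolding is_subgroup_def by blast
  have app: "aff_apply g (aff_apply h y) = y" for y
    using h(2) aff_apply_comp[of g h y] by simp
  have hy: "aff_apply h y = y - Lf g y - snd g" for y
  proof -
    define u where "u = aff_apply h y"
    have u: "u + Lf g u + snd g = y" using app[of y] by (simp add: u_def aff_apply_Lf)
    then have "Lf g (u + Lf g u + snd g) = Lf g y" by simp
    then have "Lf g u = Lf g y" using assms by simp
    then show ?thesis using u u_def by (simp add: algebra_simps)
  qed
  have "\<And>x. Lf h x = - Lf g x" unfolding Lf_via_apply[of h] hy by (simp add: algebra_simps)
  moreover have "snd h = - snd g" unfolding snd_via_apply[of h] hy by simp
  ultimately show ?thesis using that h(1) by blast
qed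

lemma P1:
  assumes g: "g \<in> G" and h: "h \<in> G"
  shows "Lf g (Lf h x) = - Lf h (Lf g x)"
proof -
  have gh: "aff_comp g h \<in> G" using comp_mem g h by blast
  have S: "pform e (Lf g u) (Lf h v) + pform e (Lf h u) (Lf g v) = 0" for u v
  proof -
    have "pform e (Lf (aff_comp g h) u) (Lf (aff_comp g h) v) = 0" using gh by simp
    moreover have "pform e (Lf g (Lf h u)) (Lf h v) = - pform e (Lf h u) (Lf g (Lf h v))"
      using F1 g by blast
    ultimately show ?thesis using g h unfolding comp_L by simp
  qed
  have "Lf g (Lf h x) + Lf h (Lf g x) = 0"
  proof (rule nondeg)
    fix y
    show "pform e (Lf g (Lf h x) + Lf h (Lf g x)) y = 0"
      using F1[OF g, of "Lf h x" y] F1[OF h, of "Lf g x" y] S[of x y]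
        pform_sym[of e "Lf h x" "Lf g y"] pform_sym[of e "Lf g x" "Lf h y"] by simp
  qed
  then show ?thesis by (simp add: eq_neg_iff_add_eq_0)
qed

end



context wolf begin

lemma T3:
  assumes g: "g \<in> G" and h: "h \<in> G" and k: "k \<in> G"
  shows "Lf g (Lf h (Lf k x)) = 0"
proof -
  have gh: "aff_comp g h \<in> G" using comp_mem g h by blast
  have 1: "Lf g (Lf k x) + Lf h (Lf k x) + Lf g (Lf h (Lf k x))
      = - (Lf k (Lf g x) + Lf k (Lf h x) + Lf k (Lf g (Lf h x)))"
    using P1[OF gh k, of x] unfolding comp_L by simp
  have 2: "Lf g (Lf k x) = - Lf k (Lf g x)" using P1[OF g k] .
  have 3: "Lf h (Lf k x) = - Lf k (Lf h x)" using P1[OF h k] .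
  have 4: "Lf k (Lf g (Lf h x)) = - Lf g (Lf k (Lf h x))" using P1[OF k g] .
  have 5: "Lf k (Lf h x) = - Lf h (Lf k x)" using P1[OF k h] .
  have "Lf k (Lf g (Lf h x)) = Lf g (Lf h (Lf k x))" using 4 5 by simp
  then have "(2::real) *\<^sub>R Lf g (Lf h (Lf k x)) = 0" using 1 2 3
    by (simp add: algebra_simps scaleR_2)
  then show ?thesis by simp
qed

lemma W1:
  assumes g: "g \<in> G" and h: "h \<in> G"
  shows "Lf g (snd h) + Lf h (Lf g (snd h)) + Lf h (snd g) + Lf g (Lf h (snd g)) = 0"
proof -
  have gh: "aff_comp g h \<in> G" using comp_mem g h by blast
  have "Lf (aff_comp g h) (snd (aff_comp g h)) = 0" using gh by simp
  then show ?thesis unfolding comp_L comp_T using g h T3[OF g h g] by (simp add: algebra_simps)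
qed

lemma W2:
  assumes g: "g \<in> G" and h: "h \<in> G"
  shows "Lf g (Lf h (snd g)) = 0"
proof -
  obtain g' where g': "g' \<in> G" "\<And>x. Lf g' x = - Lf g x" "snd g' = - snd g"
    using inverse[OF g] by blast
  have a: "Lf g (snd h) + Lf h (Lf g (snd h)) + Lf h (snd g) + Lf g (Lf h (snd g)) = 0"
    using W1[OF g h] .
  have b: "Lf g' (snd h) + Lf h (Lf g' (snd h)) + Lf h (snd g') + Lf g' (Lf h (snd g')) = 0"
    using W1[OF g'(1) h] .
  then have b': "- Lf g (snd h) - Lf h (Lf g (snd h)) - Lf h (snd g) + Lf g (Lf h (snd g)) = 0"
    unfolding g'(2) g'(3) by simp
  have "(2::real) *\<^sub>R Lf g (Lf h (snd g)) = 0" using a b'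
    by (simp add: algebra_simps scaleR_2)
  then show ?thesis by simp
qed

lemma W3:
  assumes g: "g \<in> G" and h: "h \<in> G"
  shows "Lf g (snd h) = - Lf h (snd g)"
  using W1[OF g h] W2[OF g h] W2[OF h g] by (simp add: eq_neg_iff_add_eq_0)

lemma W4:
  assumes g: "g \<in> G" and h: "h \<in> G" and k: "k \<in> G"
  shows "Lf g (Lf h (snd k)) = 0"
proof -
  have gh: "aff_comp g h \<in> G" using comp_mem g h by blast
  have 1: "Lf (aff_comp g h) (snd k) = - Lf k (snd (aff_comp g h))" using W3[OF gh k] .
  have 2: "Lf k (snd h) = - Lf h (snd k)" using W3[OF k h] .
  have 3: "Lf k (snd g) = - Lf g (snd k)" using W3[OF k g] .
  have 4: "Lf k (Lf g (snd h)) = - Lf g (Lf k (snd h))" using P1[OF k g] .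
  have 5: "Lf k (Lf g (snd h)) = Lf g (Lf h (snd k))" using 4 2 by simp
  have "Lf g (Lf h (snd k)) + Lf k (Lf g (snd h)) = 0"
    using 1 2 3 unfolding comp_L comp_T by (simp add: algebra_simps)
  then have "(2::real) *\<^sub>R Lf g (Lf h (snd k)) = 0" using 5 by (simp add: scaleR_2)
  then show ?thesis by simp
qed

end



context wolf begin

lemma commutator:
  assumes g: "g \<in> G" and h: "h \<in> G"
  obtains k where "k \<in> center G" "\<And>y. Lf k y = (2::real) *\<^sub>R Lf g (Lf h y)"
proof -
  obtain g' where g': "g' \<in> G" "\<And>x. Lf g' x = - Lf g x" "snd g' = - snd g"
    using inverse[OF g] by blast
  obtain h' where h': "h' \<in> G" "\<And>x. Lf h' x = - Lf h x" "snd h' = - snd h"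
    using inverse[OF h] by blast
  define k where "k = aff_comp (aff_comp g h) (aff_comp g' h')"
  have kG: "k \<in> G" unfolding k_def using comp_mem g h g' h' by blast
  have kapp: "aff_apply k y = y + (2::real) *\<^sub>R Lf g (Lf h y) + (2::real) *\<^sub>R Lf g (snd h)" for y
  proof -
    define z1 where "z1 = aff_apply h' y"
    have z1: "z1 = y - Lf h y - snd h" unfolding z1_def aff_apply_Lf h'(2) h'(3) by simp
    define z2 where "z2 = aff_apply g' z1"
    have z2: "z2 = y - Lf h y - snd h - Lf g y + Lf g (Lf h y) + Lf g (snd h) - snd g"
      unfolding z2_def aff_apply_Lf g'(2) g'(3) z1 by (simp add: algebra_simps)
    define z3 where "z3 = aff_apply h z2"
    have hz2: "Lf h z2 = Lf h y + Lf g (Lf h y) - Lf h (snd g)"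
      unfolding z2 using h P1[OF h g, of y] T3[OF h g h, of y] W4[OF h g h]
      by (simp add: algebra_simps)
    have z3: "z3 = y - Lf g y + (2::real) *\<^sub>R Lf g (Lf h y) + (2::real) *\<^sub>R Lf g (snd h) - snd g"
      unfolding z3_def aff_apply_Lf hz2 using W3[OF h g] z2 by (simp add: algebra_simps scaleR_2)
    have gz3: "Lf g z3 = Lf g y" unfolding z3 by (simp add: F3[OF g] F4[OF g])
    have "aff_apply k y = aff_apply g z3"
      unfolding k_def aff_apply_comp z3_def z2_def z1_def by simp
    also have "\<dots> = y + (2::real) *\<^sub>R Lf g (Lf h y) + (2::real) *\<^sub>R Lf g (snd h)"
      unfolding aff_apply_Lf gz3 by (simp add: z3 algebra_simps)
    finally show ?thesis .
  qed
  have Lk: "Lf k y = (2::real) *\<^sub>R Lf g (Lf h y)" for y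
    unfolding Lf_via_apply[of k] kapp by simp
  have "k \<in> center G"
    unfolding center_def
  proof (intro CollectI conjI ballI kG)
    fix f assume f: "f \<in> G"
    show "aff_comp k f = aff_comp f k"
    proof (rule aff_ext)
      fix x
      have "aff_apply (aff_comp k f) x = aff_apply k (x + Lf f x + snd f)"
        unfolding aff_apply_comp aff_apply_Lf[of f] ..
      also have "\<dots> = x + Lf f x + snd f + (2::real) *\<^sub>R Lf g (Lf h x) + (2::real) *\<^sub>R Lf g (snd h)"
        unfolding kapp using T3[OF g h f, of x] W4[OF g h f] by (simp add: algebra_simps)
      also have "\<dots> = aff_apply f (aff_apply k x)"
        unfolding kapp aff_apply_Lf[of f] using T3[OF f g h, of x] W4[OF f g h]
        by (simp add: algebra_simps)
      also have "\<dots> = aff_apply (aff_comp f k) x" unfolding aff_apply_comp ..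
      finally show "aff_apply (aff_comp k f) x = aff_apply (aff_comp f k) x" .
    qed
  qed
  then show ?thesis using that Lk by blast
qed

lemma center_sub: "center G \<subseteq> G" by (auto simp: center_def)

lemma center_kill:
  assumes g: "g \<in> G" and d: "d \<in> center G"
  shows "Lf g (Lf d x) = 0"
proof -
  have dG: "d \<in> G" and c: "aff_comp d g = aff_comp g d" using d g by (auto simp: center_def)
  have "Lf (aff_comp d g) x = Lf (aff_comp g d) x" using c by simp
  then have "Lf d (Lf g x) = Lf g (Lf d x)" unfolding comp_L by (simp add: algebra_simps)
  then have "Lf g (Lf d x) = - Lf g (Lf d x)" using P1[OF g dG, of x] by simp
  then have "Lf g (Lf d x) + Lf g (Lf d x) = 0" by (simp add: eq_neg_iff_add_eq_0)
  then have "(2::real) *\<^sub>R Lf g (Lf d x) = 0" by (simp add: scaleR_2)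
  then show ?thesis by simp
qed

end



lemma U_of_Lf: "U_of L = span (\<Union>g\<in>L. range (Lf g))"
  by (simp add: U_of_def Lf_def[abs_def])

context wolf begin

lemma orth_U: "orth e (U_of L) = {x. \<forall>g\<in>L. \<forall>y. pform e x (Lf g y) = 0}"
  unfolding U_of_Lf orth_span by (auto simp: orth_def)

lemma mainres:
  defines "U0 \<equiv> U_of G \<inter> orth e (U_of G)"
  shows "UNIV \<supseteq> orth e (U_of (center G)) \<and> orth e (U_of (center G)) \<supseteq> U0 \<and> U0 \<supseteq> {0}
    \<and> (\<forall>g\<in>G. (\<lambda>x. lin_part g *v x) ` UNIV \<subseteq> orth e (U_of (center G))
              \<and> (\<lambda>x. lin_part g *v x) ` orth e (U_of (center G)) \<subseteq> U0
              \<and> (\<lambda>x. lin_part g *v x) ` U0 = {0})"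
proof -
  have LL: "(\<lambda>x. lin_part g *v x) = Lf g" for g by (simp add: Lf_def[abs_def])
  have inUG: "Lf g x \<in> U_of G" if "g \<in> G" for g x
    unfolding U_of_Lf using that by (intro span_base) blast
  have inUD: "Lf g x \<in> U_of (center G)" if "g \<in> center G" for g x
    unfolding U_of_Lf using that by (intro span_base) blast
  have zero: "0 \<in> U0" unfolding U0_def by (simp add: span_zero U_of_def orth_def)
  have s2: "U0 \<subseteq> orth e (U_of (center G))"
    unfolding U0_def orth_U using center_sub by blast
  have s4: "Lf g x \<in> orth e (U_of (center G))" if g: "g \<in> G" for g x
    unfolding orth_U using F1[OF g] center_kill[OF g] by simp
  have s5: "Lf g x \<in> U0" if g: "g \<in> G" and x: "x \<in> orth e (U_of (center G))" for g x
  proof -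
    have "pform e (Lf g x) (Lf h y) = 0" if h: "h \<in> G" for h y
    proof -
      obtain k where k: "k \<in> center G" "\<And>y. Lf k y = (2::real) *\<^sub>R Lf g (Lf h y)"
        using commutator[OF g h] by blast
      have "Lf g (Lf h y) = (1/2::real) *\<^sub>R Lf k y" using k(2)[of y] by simp
      moreover have "pform e x (Lf k y) = 0" using x k(1) unfolding orth_U by blast
      ultimately show ?thesis using F1[OF g, of x "Lf h y"] by simp
    qed
    then show ?thesis unfolding U0_def orth_U using inUG[OF g] by blast
  qed
  have s6: "Lf g x = 0" if g: "g \<in> G" and x: "x \<in> U0" for g x
  proof (rule nondeg)
    fix y
    have "pform e x (Lf g y) = 0" using x g unfolding U0_def orth_U by blast
    then show "pform e (Lf g x) y = 0" using F1[OF g] by simp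
  qed
  have s6': "Lf g ` U0 = {0}" if g: "g \<in> G" for g
    using s6[OF g] zero by force
  show ?thesis unfolding LL using s2 zero s4 s5 s6' by blast
qed

end

theorem proposition4p3:
  fixes eps :: "'n::finite \<Rightarrow> real" and \<Gamma> :: "'n aff set"
  assumes "signature_ok eps"
    and "is_subgroup eps \<Gamma>"
    and "has_open_orbit (centralizer eps \<Gamma>)"
  defines "U0 \<equiv> U_of \<Gamma> \<inter> orth eps (U_of \<Gamma>)"
  shows "UNIV \<supseteq> orth eps (U_of (center \<Gamma>)) \<and> orth eps (U_of (center \<Gamma>)) \<supseteq> U0 \<and> U0 \<supseteq> {0}
    \<and> (\<forall>g\<in>\<Gamma>. (\<lambda>x. lin_part g *v x) ` UNIV \<subseteq> orth eps (U_of (center \<Gamma>))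
              \<and> (\<lambda>x. lin_part g *v x) ` orth eps (U_of (center \<Gamma>)) \<subseteq> U0
              \<and> (\<lambda>x. lin_part g *v x) ` U0 = {0})"
  proof -
  interpret wolf eps \<Gamma> by unfold_locales (rule assms)+
  show ?thesis unfolding U0_def by (rule mainres)
qed

end
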